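(* Let $G$ be any graph and $s\geqslant 1$ an integer. Let $G^+=\pi(G_1,G_2)$, where $G_1,G_2$ are two disjoint copies of $G$. Then $G^+$ is $\mathbf{E_s}$ if and only if $G$ is $\mathbf{E_{s-1}}$.
   Context: All graphs are finite and simple. For two disjoint graphs $G$ and $H$, $\pi(G,H)$ is the graph obtained from the disjoint union of $G$ and $H$ by adding new vertices $\Pi_G=\{\pi_u: u\in V(G)\}$ and $\Pi_H=\{\pi_u:u\in V(H)\}$, making $(\Pi_G,\Pi_H)$ a complete bipartite graph (every vertex of $\Pi_G$ adjacent to every vertex of $\Pi_H$, no edges inside $\Pi_G$ or inside $\Pi_H$), and adding the edge $u\pi_u$ for each $u\in V(G)\cup V(H)$. For a positive integer $t$, a graph is $t$-extendable if every independent set of size exactly $t$ is contained in a maximum independent set. For $s\geqslant1$, a graph is $\mathbf{E_s}$ if it is $t$-extendable for every $t\in[s]$; by convention every graph is $\mathbf{E_0}$. *)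

theory Defs
  imports Main
begin

definition simple_graph :: "'a set \<Rightarrow> ('a \<Rightarrow> 'a \<Rightarrow> bool) \<Rightarrow> bool" where
  "simple_graph V E \<longleftrightarrow> finite V \<and> (\<forall>u v. E u v \<longrightarrow> E v u)
     \<and> (\<forall>v. \<not> E v v) \<and> (\<forall>u v. E u v \<longrightarrow> u \<in> V \<and> v \<in> V)"

definition indep_set :: "'a set \<Rightarrow> ('a \<Rightarrow> 'a \<Rightarrow> bool) \<Rightarrow> 'a set \<Rightarrow> bool" where
  "indep_set V E S \<longleftrightarrow> S \<subseteq> V \<and> (\<forall>u\<in>S. \<forall>v\<in>S. \<not> E u v)"

definition max_indep_set :: "'a set \<Rightarrow> ('a \<Rightarrow> 'a \<Rightarrow> bool) \<Rightarrow> 'a set \<Rightarrow> bool" where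
  "max_indep_set V E S \<longleftrightarrow> indep_set V E S \<and> (\<forall>T. indep_set V E T \<longrightarrow> card T \<le> card S)"

definition t_extendable :: "'a set \<Rightarrow> ('a \<Rightarrow> 'a \<Rightarrow> bool) \<Rightarrow> nat \<Rightarrow> bool" where
  "t_extendable V E t \<longleftrightarrow>
     (\<forall>S. indep_set V E S \<and> card S = t \<longrightarrow> (\<exists>M. max_indep_set V E M \<and> S \<subseteq> M))"

definition E_s :: "'a set \<Rightarrow> ('a \<Rightarrow> 'a \<Rightarrow> bool) \<Rightarrow> nat \<Rightarrow> bool" where
  "E_s V E s \<longleftrightarrow> (\<forall>t\<in>{1..s}. t_extendable V E t)"

text \<open>Vertices of pi(G1,G2) for two disjoint copies G1, G2 of G:
  L u (copy of u in G1), R u (copy in G2), PL u (pi vertex of L u), PR u (pi vertex of R u).\<close>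
datatype 'a pv = L 'a | R 'a | PL 'a | PR 'a

definition pi_V :: "'a set \<Rightarrow> 'a pv set" where
  "pi_V V = L ` V \<union> R ` V \<union> PL ` V \<union> PR ` V"

fun pi_E :: "('a \<Rightarrow> 'a \<Rightarrow> bool) \<Rightarrow> 'a pv \<Rightarrow> 'a pv \<Rightarrow> bool" where
  "pi_E E (L u) (L v) = E u v"
| "pi_E E (R u) (R v) = E u v"
| "pi_E E (L u) (PL v) = (u = v)"
| "pi_E E (PL u) (L v) = (u = v)"
| "pi_E E (R u) (PR v) = (u = v)"
| "pi_E E (PR u) (R v) = (u = v)"
| "pi_E E (PL u) (PR v) = True"
| "pi_E E (PR u) (PL v) = True"
| "pi_E E _ _ = False"

end

theory Submission
  imports Defs
begin

fun base :: "'a pv \<Rightarrow> 'a" where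
  "base (L u) = u" | "base (R u) = u" | "base (PL u) = u" | "base (PR u) = u"

fun swp :: "'a pv \<Rightarrow> 'a pv" where
  "swp (L u) = R u" | "swp (R u) = L u" | "swp (PL u) = PR u" | "swp (PR u) = PL u"

fun isPR :: "'a pv \<Rightarrow> bool" where
  "isPR (PR u) = True" | "isPR _ = False"

fun isPL :: "'a pv \<Rightarrow> bool" where
  "isPL (PL u) = True" | "isPL _ = False"

fun isLs :: "'a pv \<Rightarrow> bool" where
  "isLs (L u) = True" | "isLs (PL u) = True" | "isLs _ = False"

lemma PL_PR_adj:
  assumes "indep_set V' (pi_E E) T" "x \<in> T" "y \<in> T" "isPL x" "isPR y"
  shows False
proof -
  obtain a where a: "x = PL a" using assms(4) by (cases x) auto
  obtain b where b: "y = PR b" using assms(5) by (cases y) auto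
  have "pi_E E x y" by (simp add: a b)
  then show False using assms(1-3) unfolding indep_set_def by blast
qed

lemma pi_V_iff: "x \<in> pi_V V \<longleftrightarrow> base x \<in> V"
  by (cases x) (auto simp: pi_V_def)

lemma swp_swp[simp]: "swp (swp x) = x" by (cases x) auto

lemma inj_swp: "inj swp" by (metis injI swp_swp)

lemma base_swp[simp]: "base (swp x) = base x" by (cases x) auto

lemma pi_E_swp[simp]: "pi_E E (swp x) (swp y) = pi_E E x y"
  by (cases x; cases y) auto

lemma finite_pi_V: "finite V \<Longrightarrow> finite (pi_V V)"
  by (simp add: pi_V_def)

lemma indep_swp:
  "indep_set (pi_V V) (pi_E E) (swp ` X) \<longleftrightarrow> indep_set (pi_V V) (pi_E E) X"
  by (auto simp: indep_set_def pi_V_iff)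

lemma card_swp: "card (swp ` X) = card X"
  by (rule card_image) (metis inj_onI swp_swp)

lemma mem_swp[simp]: "x \<in> swp ` S \<longleftrightarrow> swp x \<in> S"
  by (metis image_iff swp_swp)

lemma swp_img_img[simp]: "swp ` swp ` X = X"
  by (simp add: image_image)

lemma max_swp:
  assumes "max_indep_set (pi_V V) (pi_E E) M"
  shows "max_indep_set (pi_V V) (pi_E E) (swp ` M)"
  using assms unfolding max_indep_set_def
  by (metis card_swp indep_swp swp_img_img)

lemma ex_max:
  assumes "simple_graph V E"
  shows "\<exists>B. max_indep_set V E B"
proof -
  let ?F = "{S. indep_set V E S}"
  have fin: "finite ?F"
    by (rule finite_subset[of _ "Pow V"]) (use assms in \<open>auto simp: indep_set_def simple_graph_def\<close>)
  have ne: "{} \<in> ?F" by (simp add: indep_set_def)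
  have "Max (card ` ?F) \<in> card ` ?F" using fin ne by (intro Max_in) auto
  then obtain B where "B \<in> ?F" "card B = Max (card ` ?F)" by auto
  then have "B \<in> ?F" "\<forall>T\<in>?F. card T \<le> card B" using fin by auto
  then show ?thesis unfolding max_indep_set_def by auto
qed

lemma indep_fin:
  assumes "simple_graph V E" "indep_set (pi_V V) (pi_E E) T"
  shows "finite T"
  using assms by (meson finite_pi_V finite_subset indep_set_def simple_graph_def)

lemma bound_L:
  assumes sg: "simple_graph V E" and ind: "indep_set (pi_V V) (pi_E E) T"
    and noPR: "\<forall>x\<in>T. \<not> isPR x"
  shows "card T \<le> card V + card {u. R u \<in> T}"
proof -
  have finV: "finite V" using sg by (simp add: simple_graph_def)
  have finT: "finite T" using indep_fin[OF sg ind] .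
  let ?T1 = "{x\<in>T. isLs x}" and ?T2 = "{x\<in>T. \<not> isLs x}"
  have "card T \<le> card ?T1 + card ?T2"
    by (metis (no_types, lifting) Un_iff card_Un_le mem_Collect_eq subsetI card_mono finT finite_Un
        finite_subset order_trans [of "card T" "card (?T1 \<union> ?T2)"] )
  moreover have "card ?T1 \<le> card V"
  proof -
    have "inj_on base ?T1"
    proof (rule inj_onI)
      fix x y assume x: "x \<in> ?T1" and y: "y \<in> ?T1" and b: "base x = base y"
      show "x = y"
        using x y b ind unfolding indep_set_def
        by (cases x; cases y) (auto, metis pi_E.simps(3), metis pi_E.simps(4))
    qed
    moreover have "base ` ?T1 \<subseteq> V" using ind by (auto simp: indep_set_def pi_V_iff)
    ultimately show ?thesis by (metis card_image card_mono finV)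
  qed
  moreover have "card ?T2 \<le> card {u. R u \<in> T}"
  proof -
    have "?T2 = R ` {u. R u \<in> T}"
    proof
      show "?T2 \<subseteq> R ` {u. R u \<in> T}"
      proof
        fix x assume "x \<in> ?T2"
        then show "x \<in> R ` {u. R u \<in> T}" using noPR by (cases x) auto
      qed
    qed auto
    then show ?thesis by (simp add: card_image inj_on_def)
  qed
  ultimately show ?thesis by linarith
qed

lemma Rpart_indep:
  assumes "indep_set (pi_V V) (pi_E E) T"
  shows "indep_set V E {u. R u \<in> T}"
  using assms by (auto simp: indep_set_def pi_V_iff, fastforce)

lemma bound:
  assumes sg: "simple_graph V E" and mB: "max_indep_set V E B0"
    and ind: "indep_set (pi_V V) (pi_E E) T"
  shows "card T \<le> card V + card B0"
proof (cases "\<forall>x\<in>T. \<not> isPR x")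
  case True
  have "card {u. R u \<in> T} \<le> card B0"
    using Rpart_indep[OF ind] mB by (auto simp: max_indep_set_def)
  then show ?thesis using bound_L[OF sg ind True] by linarith
next
  case False
  then obtain y where y: "y \<in> T" "isPR y" by auto
  have np: "\<forall>x\<in>T. \<not> isPL x"
  proof (intro ballI notI)
    fix x assume "x \<in> T" "isPL x"
    then show False using y ind PL_PR_adj by blast
  qed
  have ind': "indep_set (pi_V V) (pi_E E) (swp ` T)" using ind indep_swp by blast
  have "\<forall>x\<in>swp ` T. \<not> isPR x"
  proof
    fix x assume "x \<in> swp ` T"
    then obtain z where "z \<in> T" "x = swp z" by auto
    then show "\<not> isPR x" using np by (cases z) auto
  qed
  from bound_L[OF sg ind' this]
  have "card (swp ` T) \<le> card V + card {u. R u \<in> swp ` T}" .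
  moreover have "card {u. R u \<in> swp ` T} \<le> card B0"
    using Rpart_indep[OF ind'] mB by (auto simp: max_indep_set_def)
  ultimately show ?thesis by (simp add: card_swp)
qed

lemma card_con:
  assumes "finite V" "A \<subseteq> V" "B \<subseteq> V"
  shows "card (L ` A \<union> PL ` (V - A) \<union> R ` B) = card V + card B"
proof -
  have fA: "finite A" "finite B" using assms finite_subset by auto
  have "card (L ` A \<union> PL ` (V - A)) = card A + card (V - A)"
    by (subst card_Un_disjoint) (auto simp: card_image inj_on_def assms fA)
  also have "\<dots> = card V" using assms(1,2) by (metis card_Diff_subset fA(1) le_add_diff_inverse card_mono)
  finally have 1: "card (L ` A \<union> PL ` (V - A)) = card V" .
  show ?thesis
    by (subst card_Un_disjoint) (auto simp: card_image inj_on_def assms fA 1)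
qed

lemma ext_L:
  assumes sg: "simple_graph V E" and ind: "indep_set (pi_V V) (pi_E E) S"
    and noPR: "\<forall>x\<in>S. \<not> isPR x" and mB: "max_indep_set V E B"
    and sub: "{u. R u \<in> S} \<subseteq> B"
  shows "\<exists>M. max_indep_set (pi_V V) (pi_E E) M \<and> S \<subseteq> M"
proof -
  define A where "A = {u. L u \<in> S}"
  have AV: "A \<subseteq> V" using ind by (auto simp: A_def indep_set_def pi_V_iff)
  have BV: "B \<subseteq> V" and Bi: "\<forall>u\<in>B. \<forall>v\<in>B. \<not> E u v"
    using mB by (auto simp: max_indep_set_def indep_set_def)
  have finV: "finite V" using sg by (simp add: simple_graph_def)
  have LL: "\<forall>a\<in>A. \<forall>b\<in>A. \<not> E a b"
    using ind unfolding A_def indep_set_def by (metis mem_Collect_eq pi_E.simps(1))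
  define M where "M = L ` A \<union> PL ` (V - A) \<union> R ` B"
  have indM: "indep_set (pi_V V) (pi_E E) M"
    unfolding indep_set_def
  proof
    show "M \<subseteq> pi_V V" using AV BV by (auto simp: M_def pi_V_iff)
    show "\<forall>u\<in>M. \<forall>v\<in>M. \<not> pi_E E u v"
    proof (intro ballI)
      fix x y assume x: "x \<in> M" and y: "y \<in> M"
      show "\<not> pi_E E x y"
        using x y Bi LL unfolding M_def by auto
    qed
  qed
  have "S \<subseteq> M"
  proof
    fix x assume xS: "x \<in> S"
    show "x \<in> M"
    proof (cases x)
      case (L u) then show ?thesis using xS by (auto simp: M_def A_def)
    next
      case (R u) then show ?thesis using xS sub by (auto simp: M_def)
    next
      case (PL u)
      have "u \<in> V" using xS PL ind by (auto simp: indep_set_def pi_V_iff)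
      moreover have "u \<notin> A" using xS PL ind unfolding indep_set_def A_def
        by (metis mem_Collect_eq pi_E.simps(3))
      ultimately show ?thesis using PL by (auto simp: M_def)
    next
      case (PR u) then show ?thesis using xS noPR by auto
    qed
  qed
  moreover have "max_indep_set (pi_V V) (pi_E E) M"
    unfolding max_indep_set_def
  proof (intro conjI allI impI indM)
    fix T assume "indep_set (pi_V V) (pi_E E) T"
    then have "card T \<le> card V + card B" using bound[OF sg mB] by blast
    also have "\<dots> = card M" unfolding M_def using card_con[OF finV AV BV] by simp
    finally show "card T \<le> card M" .
  qed
  ultimately show ?thesis by blast
qed

lemma ext_R:
  assumes sg: "simple_graph V E" and ind: "indep_set (pi_V V) (pi_E E) S"
    and noPL: "\<forall>x\<in>S. \<not> isPL x" and mB: "max_indep_set V E B"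
    and sub: "{u. L u \<in> S} \<subseteq> B"
  shows "\<exists>M. max_indep_set (pi_V V) (pi_E E) M \<and> S \<subseteq> M"
proof -
  have ind': "indep_set (pi_V V) (pi_E E) (swp ` S)" using ind indep_swp by blast
  have np: "\<forall>x\<in>swp ` S. \<not> isPR x"
  proof
    fix x assume "x \<in> swp ` S"
    then obtain z where "z \<in> S" "x = swp z" by auto
    then show "\<not> isPR x" using noPL by (cases z) auto
  qed
  have "{u. R u \<in> swp ` S} = {u. L u \<in> S}"
    by simp
  then obtain M where "max_indep_set (pi_V V) (pi_E E) M" "swp ` S \<subseteq> M"
    using ext_L[OF sg ind' np mB] sub by auto
  then show ?thesis using max_swp
    by (metis image_mono swp_img_img)
qed

lemma extB:
  assumes sg: "simple_graph V E" and Es: "E_s V E (s - 1)"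
    and ind: "indep_set V E B" and c: "card B < s"
  shows "\<exists>B'. max_indep_set V E B' \<and> B \<subseteq> B'"
proof (cases "card B = 0")
  case True
  then have "B = {}" using ind sg
    by (meson card_0_eq finite_subset indep_set_def simple_graph_def)
  then show ?thesis using ex_max[OF sg] by auto
next
  case False
  then have "t_extendable V E (card B)" using Es c unfolding E_s_def by auto
  then show ?thesis using ind unfolding t_extendable_def by auto
qed

lemma dir1:
  assumes sg: "simple_graph V E" and H: "E_s (pi_V V) (pi_E E) s"
  shows "E_s V E (s - 1)"
  unfolding E_s_def t_extendable_def
proof (intro ballI allI impI)
  fix t S assume t: "t \<in> {1..s - 1}" and S: "indep_set V E S \<and> card S = t"
  have finV: "finite V" using sg by (simp add: simple_graph_def)
  have finS: "finite S" using S finV by (meson finite_subset indep_set_def)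
  then obtain v where v: "v \<in> S" using S t by fastforce
  have vV: "v \<in> V" using v S by (auto simp: indep_set_def)
  define S' where "S' = insert (PL v) (R ` S)"
  have cS': "card S' = t + 1" unfolding S'_def using finS S
    by (subst card_insert_disjoint) (auto simp: card_image inj_on_def)
  have iS': "indep_set (pi_V V) (pi_E E) S'"
    using S vV unfolding S'_def indep_set_def by (auto simp: pi_V_iff)
  have "t_extendable (pi_V V) (pi_E E) (t + 1)" using H t unfolding E_s_def by auto
  then obtain M where M: "max_indep_set (pi_V V) (pi_E E) M" "S' \<subseteq> M"
    using iS' cS' unfolding t_extendable_def by blast
  have iM: "indep_set (pi_V V) (pi_E E) M" using M by (simp add: max_indep_set_def)
  have PLM: "PL v \<in> M" using M by (simp add: S'_def)
  have noPR: "\<forall>x\<in>M. \<not> isPR x"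
  proof (intro ballI notI)
    fix x assume "x \<in> M" "isPR x"
    then show False using PLM iM PL_PR_adj by (metis isPL.simps(1))
  qed
  define B where "B = {u. R u \<in> M}"
  have iB: "indep_set V E B" unfolding B_def by (rule Rpart_indep[OF iM])
  have SB: "S \<subseteq> B" using M by (auto simp: B_def S'_def)
  obtain B0 where B0: "max_indep_set V E B0" using ex_max[OF sg] by auto
  have B0V: "B0 \<subseteq> V" using B0 by (simp add: max_indep_set_def indep_set_def)
  have "card V + card B0 = card (L ` {} \<union> PL ` (V - {}) \<union> R ` B0)"
    using card_con[OF finV _ B0V, of "{}"] by simp
  also have "\<dots> \<le> card M"
  proof -
    have "indep_set (pi_V V) (pi_E E) (L ` {} \<union> PL ` (V - {}) \<union> R ` B0)"
      using B0 B0V unfolding max_indep_set_def indep_set_def by (auto simp: pi_V_iff)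
    then show ?thesis using M by (simp add: max_indep_set_def)
  qed
  also have "\<dots> \<le> card V + card B" unfolding B_def using bound_L[OF sg iM noPR] .
  finally have "card B0 \<le> card B" by simp
  then have "max_indep_set V E B" using iB B0 unfolding max_indep_set_def by force
  then show "\<exists>M. max_indep_set V E M \<and> S \<subseteq> M" using SB by blast
qed

lemma dir2:
  assumes sg: "simple_graph V E" and G: "E_s V E (s - 1)"
  shows "E_s (pi_V V) (pi_E E) s"
  unfolding E_s_def t_extendable_def
proof (intro ballI allI impI, elim conjE)
  fix t S assume t: "t \<in> {1..s}" and iS: "indep_set (pi_V V) (pi_E E) S" and cS: "card S = t"
  have finS: "finite S" using indep_fin[OF sg iS] .
  define A where "A = {u. L u \<in> S}"
  define B where "B = {u. R u \<in> S}"
  have cA: "card A = card (L ` A)" by (simp add: card_image inj_on_def)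
  have cB: "card B = card (R ` B)" by (simp add: card_image inj_on_def)
  have LA: "L ` A \<subseteq> S" and RB: "R ` B \<subseteq> S" by (auto simp: A_def B_def)
  have iA: "indep_set V E A" using iS by (auto simp: indep_set_def A_def pi_V_iff, fastforce)
  have iB: "indep_set V E B" unfolding B_def by (rule Rpart_indep[OF iS])
  show "\<exists>M. max_indep_set (pi_V V) (pi_E E) M \<and> S \<subseteq> M"
  proof (cases "(\<forall>x\<in>S. \<not> isPR x) \<and> card B < t")
    case True
    then obtain B' where "max_indep_set V E B'" "B \<subseteq> B'"
      using extB[OF sg G iB] t by auto
    then show ?thesis using ext_L[OF sg iS] True B_def by auto
  next
    case False
    have noPL: "\<forall>x\<in>S. \<not> isPL x" and cAt: "card A < t"
    proof -
      have "(\<forall>x\<in>S. \<not> isPL x) \<and> card A < t"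
      proof (cases "\<forall>x\<in>S. \<not> isPR x")
        case True
        then have "card B \<ge> t" using False by auto
        moreover have "card B \<le> t" using cB RB cS finS by (metis card_mono)
        ultimately have "R ` B = S" using cB RB cS finS by (metis card_subset_eq le_antisym)
        then have "A = {}" "\<forall>x\<in>S. \<not> isPL x" by (auto simp: A_def)
        then show ?thesis using t by auto
      next
        case False
        then obtain y where y: "y \<in> S" "isPR y" by auto
        have np: "\<forall>x\<in>S. \<not> isPL x"
        proof (intro ballI notI)
          fix x assume "x \<in> S" "isPL x"
          then show False using y iS PL_PR_adj by blast
        qed
        have "y \<notin> L ` A" using y by auto
        then have "L ` A \<subset> S" using LA y by blast
        then have "card (L ` A) < card S" using finS by (simp add: psubset_card_mono)
        then show ?thesis using np cA cS by simp
      qed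
      then show "\<forall>x\<in>S. \<not> isPL x" "card A < t" by auto
    qed
    obtain A' where "max_indep_set V E A'" "A \<subseteq> A'"
      using extB[OF sg G iA] t cAt by auto
    then show ?thesis using ext_R[OF sg iS noPL] A_def by auto
  qed
qed

theorem lemma3:
  fixes V :: "'a set" and E :: "'a \<Rightarrow> 'a \<Rightarrow> bool" and s :: nat
  assumes "simple_graph V E" and "s \<ge> 1"
  shows "E_s (pi_V V) (pi_E E) s \<longleftrightarrow> E_s V E (s - 1)"
  using dir1[OF assms(1)] dir2[OF assms(1)] by blast

end
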